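(* Let $d_{\text{m}}\ge 1$, $1\le r\le d_{\text{m}}$, and $\boldsymbol{W}_{\text{qk},i}\in\mathbb{R}^{d_{\text{m}}\times d_{\text{m}}}$. Let $\boldsymbol{x}_{\text{q}}$ and $\boldsymbol{x}_{\text{kv}}$ be independent random row vectors in $\mathbb{R}^{d_{\text{m}}}$ with distributions $\mathbb{X}_\text{q}$, $\mathbb{X}_\text{kv}$ having finite second moments, such that the autocorrelation matrices $\boldsymbol{R}_{\mathbb{X}_\text{q}\mathbb{X}_\text{q}}:=\mathbb{E}\{\boldsymbol{x}_{\text{q}}^T\boldsymbol{x}_{\text{q}}\}$ and $\boldsymbol{R}_{\mathbb{X}_\text{kv}\mathbb{X}_\text{kv}}:=\mathbb{E}\{\boldsymbol{x}_{\text{kv}}^T\boldsymbol{x}_{\text{kv}}\}$ are positive definite, with unique symmetric square roots $\boldsymbol{R}_{\mathbb{X}_\text{q}\mathbb{X}_\text{q}}^{1/2}$, $\boldsymbol{R}_{\mathbb{X}_\text{kv}\mathbb{X}_\text{kv}}^{1/2}$. Consider the problem $$\operatorname{arg\,min}_{\widetilde{\boldsymbol{W}}_{\text{qk},i}}\ \mathbb{E}\left\{\left(\boldsymbol{x}_{\text{q}}(\boldsymbol{W}_{\text{qk},i}-\widetilde{\boldsymbol{W}}_{\text{qk},i})\boldsymbol{x}_{\text{kv}}^T\right)^2\right\}\quad\text{s.t.}\quad\operatorname{rank}(\widetilde{\boldsymbol{W}}_{\text{qk},i})=r.$$ Then an optimal solution is $$\widetilde{\boldsymbol{W}}_{\t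ext{qk},i}=\left(\boldsymbol{R}_{\mathbb{X}_\text{q}\mathbb{X}_\text{q}}^{1/2}\right)^{-1}\mathrm{SVD}_r\!\left(\boldsymbol{R}_{\mathbb{X}_\text{q}\mathbb{X}_\text{q}}^{1/2}\boldsymbol{W}_{\text{qk},i}\boldsymbol{R}_{\mathbb{X}_\text{kv}\mathbb{X}_\text{kv}}^{1/2}\right)\left(\boldsymbol{R}_{\mathbb{X}_\text{kv}\mathbb{X}_\text{kv}}^{1/2}\right)^{-1}.$$
   Context: $\mathrm{SVD}_r(\boldsymbol{M})$ denotes the truncated SVD: if $\boldsymbol{M}=\boldsymbol{U}\boldsymbol{\Sigma}\boldsymbol{V}^T$ is a singular value decomposition with singular values in decreasing order, then $\mathrm{SVD}_r(\boldsymbol{M})=\boldsymbol{U}_{:,:r}\boldsymbol{\Sigma}_{:r,:r}\boldsymbol{V}^T_{:r,:}$. Here $\boldsymbol{W}_{\text{qk},i}=\boldsymbol{W}_{\text{q},i}\boldsymbol{W}_{\text{k},i}^T$ is the fused query/key weight of attention head $i$, and the objective is the expected squared error of the pre-softmax attention score $\boldsymbol{x}_{\text{q}}\boldsymbol{W}_{\text{qk},i}\boldsymbol{x}_{\text{kv}}^T$. Vectors are row vectors. *)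

theory Defs
  imports "HOL-Analysis.Analysis" "HOL-Probability.Probability"
begin

type_synonym 'n rmat = "real^'n^'n"

text \<open>Matrices are real^'n^'n; the index type 'n is finite (d_m = CARD('n)) and
  linearly ordered, so that "first r indices" and "decreasing order" make sense.\<close>

definition diag_mat :: "('n::finite \<Rightarrow> real) \<Rightarrow> real^'n^'n" where
  "diag_mat s = (\<chi> i j. if i = j then s i else 0)"

definition is_svd :: "('n::{finite,linorder}) rmat \<Rightarrow> 'n rmat \<Rightarrow> ('n \<Rightarrow> real) \<Rightarrow> 'n rmat \<Rightarrow> bool" where 
  "is_svd M U s V \<longleftrightarrow> orthogonal_matrix U \<and> orthogonal_matrix V \<and>
     (\<forall>i. 0 \<le> s i) \<and> (\<forall>i j. i \<le> j \<longrightarrow> s j \<le> s i) \<and>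
     M = U ** diag_mat s ** transpose V"

definition idx_pos :: "'n::{finite,linorder} \<Rightarrow> nat" where
  "idx_pos i = card {k. k < i}"

text \<open>U_{:,:r} Sigma_{:r,:r} V^T_{:r,:}, written as U diag(truncated s) V^T.\<close>
definition svd_trunc :: "nat \<Rightarrow> ('n::{finite,linorder}) rmat \<Rightarrow> ('n \<Rightarrow> real) \<Rightarrow> 'n rmat \<Rightarrow> 'n rmat" where 
  "svd_trunc r U s V = U ** diag_mat (\<lambda>i. if idx_pos i < r then s i else 0) ** transpose V"

definition autocorr :: "'a measure \<Rightarrow> ('a \<Rightarrow> real^'n) \<Rightarrow> real^'n^'n" where
  "autocorr M x = (\<chi> i j. integral\<^sup>L M (\<lambda>\<omega>. x \<omega> $ i * x \<omega> $ j))"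

definition pos_def_mat :: "real^'n^'n \<Rightarrow> bool" where
  "pos_def_mat A \<longleftrightarrow> transpose A = A \<and> (\<forall>v. v \<noteq> 0 \<longrightarrow> 0 < v \<bullet> (A *v v))"

definition pos_semidef_mat :: "real^'n^'n \<Rightarrow> bool" where
  "pos_semidef_mat A \<longleftrightarrow> transpose A = A \<and> (\<forall>v. 0 \<le> v \<bullet> (A *v v))"

definition is_sqrt_mat :: "real^'n^'n \<Rightarrow> real^'n^'n \<Rightarrow> bool" where
  "is_sqrt_mat S R \<longleftrightarrow> pos_semidef_mat S \<and> S ** S = R"

definition qk_err :: "'a measure \<Rightarrow> ('a \<Rightarrow> real^'n) \<Rightarrow> ('a \<Rightarrow> real^'n) \<Rightarrow> real^'n^'n \<Rightarrow> real^'n^'n \<Rightarrow> real" where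
  "qk_err M xq xkv W Wt = integral\<^sup>L M (\<lambda>\<omega>. (xq \<omega> \<bullet> ((W - Wt) *v xkv \<omega>))\<^sup>2)"

end

theory Submission
  imports Defs
begin

definition frob :: "real^'n^'m \<Rightarrow> real" where
  "frob X = (\<Sum>i\<in>UNIV. \<Sum>j\<in>UNIV. (X$i$j)\<^sup>2)"

lemma frob_rows: "frob X = (\<Sum>i\<in>UNIV. (norm (X$i))\<^sup>2)"
  unfolding frob_def by (simp only: power2_norm_eq_inner) (simp add: inner_vec_def power2_eq_square)

lemma frob_transpose: "frob (transpose X) = frob X"
proof -
  have "frob (transpose X) = (\<Sum>i\<in>UNIV. \<Sum>j\<in>UNIV. (X$j$i)\<^sup>2)"
    by (simp add: frob_def transpose_def)
  also have "\<dots> = frob X" unfolding frob_def by (rule sum.swap)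
  finally show ?thesis .
qed

lemma norm_orth_mult:
  fixes Q :: "real^'n^'n"
  assumes "orthogonal_matrix Q"
  shows "norm (Q *v x) = norm x"
proof -
  have "(Q *v x) \<bullet> (Q *v x) = (x v* transpose Q) \<bullet> (Q *v x)"
    by (simp add: vector_transpose_matrix)
  also have "\<dots> = x \<bullet> (transpose Q *v (Q *v x))" by (rule dot_lmul_matrix)
  also have "\<dots> = x \<bullet> ((transpose Q ** Q) *v x)" by (simp add: matrix_vector_mul_assoc)
  also have "\<dots> = x \<bullet> x" using assms by (simp add: orthogonal_matrix_def)
  finally show ?thesis by (simp add: norm_eq_sqrt_inner)
qed

lemma frob_orth_left:
  fixes Q :: "real^'n^'n" and X :: "real^'m^'n"
  assumes "orthogonal_matrix Q"
  shows "frob (Q ** X) = frob X"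
proof -
  have "frob (Q ** X) = frob (transpose (Q ** X))" by (simp add: frob_transpose)
  also have "\<dots> = (\<Sum>j\<in>UNIV. (norm (Q *v column j X))\<^sup>2)"
    unfolding frob_rows
    by (simp add: matrix_transpose_mul transpose_def column_def matrix_matrix_mult_def matrix_vector_mult_def)
  also have "\<dots> = (\<Sum>j\<in>UNIV. (norm (column j X))\<^sup>2)" using norm_orth_mult[OF assms] by simp
  also have "\<dots> = frob (transpose X)" unfolding frob_rows
    by (simp add: transpose_def column_def)
  finally show ?thesis by (simp add: frob_transpose)
qed

lemma frob_orth_right:
  fixes Q :: "real^'n^'n" and X :: "real^'n^'m"
  assumes "orthogonal_matrix Q"
  shows "frob (X ** Q) = frob X"
proof -
  have "frob (X ** Q) = frob (transpose (X ** Q))" by (simp add: frob_transpose)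
  also have "\<dots> = frob (transpose Q ** transpose X)" by (simp add: matrix_transpose_mul)
  also have "\<dots> = frob (transpose X)" using assms by (simp add: frob_orth_left)
  finally show ?thesis by (simp add: frob_transpose)
qed



lemma idx_pos_mono:
  fixes i j :: "'n::{finite,linorder}"
  assumes "i < j" shows "idx_pos i < idx_pos j"
proof -
  have "{k. k < i} \<subset> {k. k < j}" using assms by auto
  then show ?thesis unfolding idx_pos_def by (intro psubset_card_mono) auto
qed

lemma idx_pos_le_iff:
  fixes i j :: "'n::{finite,linorder}"
  shows "idx_pos i \<le> idx_pos j \<longleftrightarrow> i \<le> j"
  by (metis idx_pos_mono leD le_less linorder_le_less_linear)

lemma idx_pos_inj: "inj (idx_pos :: 'n::{finite,linorder} \<Rightarrow> nat)"
  by (rule injI) (metis idx_pos_le_iff order_antisym order_refl)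

lemma idx_pos_lt: "idx_pos (i::'n::{finite,linorder}) < CARD('n)"
proof -
  have "{k. k < i} \<subset> UNIV" by auto
  then show ?thesis unfolding idx_pos_def by (intro psubset_card_mono) auto
qed

lemma idx_pos_image: "idx_pos ` (UNIV :: 'n::{finite,linorder} set) = {..<CARD('n)}"
proof -
  have "idx_pos ` (UNIV :: 'n set) \<subseteq> {..<CARD('n)}" using idx_pos_lt by auto
  moreover have "card (idx_pos ` (UNIV :: 'n set)) = card {..<CARD('n)}"
    using card_image[OF idx_pos_inj] by simp
  ultimately show ?thesis by (intro card_subset_eq) auto
qed

lemma card_T:
  assumes "r \<le> CARD('n::{finite,linorder})"
  shows "card {k::'n. idx_pos k < r} = r"
proof -
  have "idx_pos ` {k::'n. idx_pos k < r} = {..<r}"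
  proof
    show "idx_pos ` {k::'n. idx_pos k < r} \<subseteq> {..<r}" by auto
    show "{..<r} \<subseteq> idx_pos ` {k::'n. idx_pos k < r}"
    proof
      fix m assume "m \<in> {..<r}"
      then have "m \<in> idx_pos ` (UNIV :: 'n set)" using assms idx_pos_image by auto
      then show "m \<in> idx_pos ` {k::'n. idx_pos k < r}" using \<open>m \<in> {..<r}\<close> by auto
    qed
  qed
  moreover have "card (idx_pos ` {k::'n. idx_pos k < r}) = card {k::'n. idx_pos k < r}"
    using idx_pos_inj by (intro card_image) (auto intro: inj_on_subset)
  ultimately show ?thesis by simp
qed

lemma card_T_le: "card {k::'n::{finite,linorder}. idx_pos k < r} \<le> r"
proof -
  have "card {k::'n. idx_pos k < r} = card (idx_pos ` {k::'n. idx_pos k < r})"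
    using idx_pos_inj by (intro card_image[symmetric]) (auto intro: inj_on_subset)
  also have "\<dots> \<le> card {..<r}" by (intro card_mono) auto
  finally show ?thesis by simp
qed

lemma diag_mat_row: "diag_mat a $ i = axis i (a i)"
  unfolding diag_mat_def axis_def by (simp add: vec_eq_iff)

lemma diag_mat_diff: "diag_mat a - diag_mat b = diag_mat (\<lambda>i. a i - b i)"
  unfolding diag_mat_def by (simp add: vec_eq_iff)

lemma diag_mat_mult_axis: "diag_mat a *v axis i c = axis i (a i * c)"
proof -
  have "(diag_mat a *v axis i c) $ k = axis i (a i * c) $ k" for k
  proof -
    have "(diag_mat a *v axis i c) $ k = (\<Sum>j\<in>UNIV. (if k = j then a k else 0) * axis i c $ j)"
      unfolding diag_mat_def matrix_vector_mult_def by simp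
    also have "\<dots> = (\<Sum>j\<in>UNIV. if k = j then a k * axis i c $ j else 0)"
      by (intro sum.cong) auto
    also have "\<dots> = a k * axis i c $ k" by simp
    also have "\<dots> = axis i (a i * c) $ k" by (simp add: axis_def)
    finally show ?thesis .
  qed
  then show ?thesis by (simp add: vec_eq_iff)
qed

lemma rank_diag_le: "rank (diag_mat a :: real^'n^'n) \<le> card {i. a i \<noteq> 0}"
proof -
  let ?N = "{i. a i \<noteq> 0}"
  have "rows (diag_mat a) \<subseteq> span ((\<lambda>i. axis i (1::real)) ` ?N)"
  proof
    fix v assume "v \<in> rows (diag_mat a)"
    then obtain i where v: "v = row i (diag_mat a)" by (auto simp: rows_def)
    have "v = a i *\<^sub>R axis i 1"
      using v by (simp add: row_def diag_mat_def axis_def vec_eq_iff)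
    then show "v \<in> span ((\<lambda>i. axis i (1::real)) ` ?N)"
      by (cases "a i = 0") (auto intro: span_mul span_base simp: span_zero)
  qed
  then have "dim (rows (diag_mat a)) \<le> card ((\<lambda>i. axis i (1::real)) ` ?N)"
    by (intro dim_le_card) auto
  also have "\<dots> \<le> card ?N" by (rule card_image_le) simp
  finally show ?thesis by (simp add: row_rank_def)
qed

lemma rank_diag_ge: "card {i. a i \<noteq> 0} \<le> rank (diag_mat a :: real^'n^'n)"
proof -
  let ?N = "{i. a i \<noteq> 0}"
  let ?B = "(\<lambda>i. axis i (1::real)) ` ?N"
  have "?B \<subseteq> range (\<lambda>x. diag_mat a *v x)"
  proof
    fix v assume "v \<in> ?B"
    then obtain i where i: "a i \<noteq> 0" "v = axis i 1" by auto
    then have "v = diag_mat a *v axis i (1 / a i)" by (simp add: diag_mat_mult_axis)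
    then show "v \<in> range (\<lambda>x. diag_mat a *v x)" by auto
  qed
  moreover have "independent ?B"
    by (rule independent_mono[OF independent_Basis]) (auto simp: Basis_vec_def)
  ultimately have "card ?B \<le> dim (range (\<lambda>x. diag_mat a *v x))"
    by (rule independent_card_le_dim)
  moreover have "card ?B = card ?N"
    by (intro card_image) (auto simp: inj_on_def axis_eq_axis)
  ultimately show ?thesis by (simp add: rank_dim_range)
qed

lemma rank_diag: "rank (diag_mat a :: real^'n^'n) = card {i. a i \<noteq> 0}"
  using rank_diag_le rank_diag_ge by (metis le_antisym)

lemma rank_inv_left:
  fixes A :: "real^'n^'n" and B :: "real^'m^'n"
  assumes "invertible A" shows "rank (A ** B) = rank B"
proof -
  obtain A' where A': "A' ** A = mat 1" using assms invertible_left_inverse by blast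
  have e: "A' ** (A ** B) = B" by (metis matrix_mul_assoc matrix_mul_lid A')
  have "rank (A' ** (A ** B)) \<le> rank (A ** B)" by (rule rank_mul_le_right)
  then have "rank B \<le> rank (A ** B)" by (simp only: e)
  moreover have "rank (A ** B) \<le> rank B" by (rule rank_mul_le_right)
  ultimately show ?thesis by (rule antisym[rotated])
qed

lemma rank_inv_right:
  fixes A :: "real^'n^'n" and B :: "real^'n^'m"
  assumes "invertible A" shows "rank (B ** A) = rank B"
proof -
  obtain A' where A': "A ** A' = mat 1" using assms invertible_right_inverse by blast
  have e: "(B ** A) ** A' = B" by (metis matrix_mul_assoc matrix_mul_rid A')
  have "rank ((B ** A) ** A') \<le> rank (B ** A)" by (rule rank_mul_le_left)
  then have "rank B \<le> rank (B ** A)" by (simp only: e)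
  moreover have "rank (B ** A) \<le> rank B" by (rule rank_mul_le_left)
  ultimately show ?thesis by (rule antisym[rotated])
qed

lemma orth_invertible: "orthogonal_matrix (Q::real^'n^'n) \<Longrightarrow> invertible Q"
  unfolding orthogonal_matrix_def invertible_def by blast



lemma bessel_proj:
  fixes y :: "'a::euclidean_space" and Q :: "'a set"
  assumes fin: "finite Q" and orth: "pairwise orthogonal Q" and nrm: "\<And>b. b \<in> Q \<Longrightarrow> norm b = 1"
  shows "(\<Sum>b\<in>Q. (y \<bullet> b)\<^sup>2) \<le> (norm y)\<^sup>2"
    and "x \<in> span Q \<Longrightarrow> (norm y)\<^sup>2 - (\<Sum>b\<in>Q. (y \<bullet> b)\<^sup>2) \<le> (norm (y - x))\<^sup>2"
proof -
  define p where "p = (\<Sum>b\<in>Q. (y \<bullet> b) *\<^sub>R b)"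
  have bc: "b \<bullet> c = (if b = c then 1 else 0)" if "b \<in> Q" "c \<in> Q" for b c
    using that orth nrm by (auto simp: pairwise_def orthogonal_def norm_eq_1)
  have pc: "p \<bullet> c = y \<bullet> c" if "c \<in> Q" for c
  proof -
    have "p \<bullet> c = (\<Sum>b\<in>Q. (y \<bullet> b) * (b \<bullet> c))" by (simp add: p_def inner_sum_left)
    also have "\<dots> = (\<Sum>b\<in>Q. if b = c then y \<bullet> b else 0)"
      by (intro sum.cong) (auto simp: bc that)
    also have "\<dots> = y \<bullet> c" using fin that by simp
    finally show ?thesis .
  qed
  have pp: "(norm p)\<^sup>2 = (\<Sum>b\<in>Q. (y \<bullet> b)\<^sup>2)"
  proof -
    have "(norm p)\<^sup>2 = p \<bullet> p" by (simp add: power2_norm_eq_inner)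
    also have "\<dots> = (\<Sum>b\<in>Q. (y \<bullet> b) * (p \<bullet> b))" by (simp add: p_def inner_sum_right)
    also have "\<dots> = (\<Sum>b\<in>Q. (y \<bullet> b)\<^sup>2)" by (intro sum.cong) (auto simp: pc power2_eq_square)
    finally show ?thesis .
  qed
  have pspan: "p \<in> span Q" unfolding p_def by (intro span_sum span_mul span_base)
  have orthz: "orthogonal (y - p) z" if "z \<in> span Q" for z
    using that by (rule orthogonal_to_span) (simp add: orthogonal_def inner_diff_left pc)
  have key: "(norm (y - x))\<^sup>2 = (norm (y - p))\<^sup>2 + (norm (p - x))\<^sup>2" if "x \<in> span Q" for x
  proof -
    have "y - x = (y - p) + (p - x)" by simp
    moreover have "orthogonal (y - p) (p - x)" using orthz pspan that span_diff by blast
    ultimately show ?thesis by (metis norm_add_Pythagorean)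
  qed
  have y0: "(norm y)\<^sup>2 = (norm (y - p))\<^sup>2 + (norm p)\<^sup>2"
    using key[of 0] by (simp add: span_zero)
  show "(\<Sum>b\<in>Q. (y \<bullet> b)\<^sup>2) \<le> (norm y)\<^sup>2" using y0 pp by simp
  show "(norm y)\<^sup>2 - (\<Sum>b\<in>Q. (y \<bullet> b)\<^sup>2) \<le> (norm (y - x))\<^sup>2" if "x \<in> span Q"
    using key[OF that] y0 pp by simp
qed

lemma rearr:
  fixes t p :: "'n::finite \<Rightarrow> real" and T :: "'n set"
  assumes p01: "\<And>k. 0 \<le> p k \<and> p k \<le> 1" and t0: "\<And>k. 0 \<le> t k"
    and tT: "\<And>k k'. k \<in> T \<Longrightarrow> k' \<notin> T \<Longrightarrow> t k' \<le> t k"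
    and ps: "(\<Sum>k\<in>UNIV. p k) \<le> real (card T)"
  shows "(\<Sum>k\<in>UNIV. p k * t k) \<le> (\<Sum>k\<in>T. t k)"
proof (cases "T = {}")
  case True
  have "sum p UNIV \<ge> 0" using p01 by (simp add: sum_nonneg)
  then have "sum p UNIV = 0" using ps True by simp
  then have "\<forall>k\<in>UNIV. p k = 0" using p01 sum_nonneg_eq_0_iff[of UNIV p] by simp
  then show ?thesis using True by simp
next
  case False
  define c where "c = Min (t ` T)"
  have cT: "c \<le> t k" if "k \<in> T" for k unfolding c_def using that by simp
  have "Min (t ` T) \<in> t ` T" using False by (intro Min_in) auto
  then obtain k0 where k0: "k0 \<in> T" "c = t k0" unfolding c_def by auto
  have c0: "0 \<le> c" using k0 t0 by simp
  have cnT: "t k \<le> c" if "k \<notin> T" for k using tT[OF k0(1) that] k0 by simp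
  have split1: "(\<Sum>k\<in>UNIV. p k * t k) = (\<Sum>k\<in>T. p k * t k) + (\<Sum>k\<in>-T. p k * t k)"
    using sum.Int_Diff[of UNIV _ T] by (simp add: Compl_eq_Diff_UNIV)
  have split2: "(\<Sum>k\<in>UNIV. p k) = (\<Sum>k\<in>T. p k) + (\<Sum>k\<in>-T. p k)"
    using sum.Int_Diff[of UNIV _ T] by (simp add: Compl_eq_Diff_UNIV)
  have a: "(\<Sum>k\<in>-T. p k * t k) \<le> (\<Sum>k\<in>-T. p k * c)"
    by (intro sum_mono mult_left_mono) (auto simp: cnT p01)
  have b: "(\<Sum>k\<in>T. (1 - p k) * c) \<le> (\<Sum>k\<in>T. (1 - p k) * t k)"
    by (intro sum_mono mult_left_mono) (auto simp: cT p01)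
  have bb: "(\<Sum>k\<in>T. (1 - p k) * t k) = (\<Sum>k\<in>T. t k) - (\<Sum>k\<in>T. p k * t k)"
    by (simp add: algebra_simps sum_subtractf)
  have cc: "(\<Sum>k\<in>T. (1 - p k) * c) = c * (real (card T) - (\<Sum>k\<in>T. p k))"
    by (simp add: algebra_simps sum_subtractf sum_distrib_left)
  have dd: "(\<Sum>k\<in>-T. p k * c) = c * (\<Sum>k\<in>-T. p k)"
    by (simp add: algebra_simps sum_distrib_left)
  have "0 \<le> c * (real (card T) - (\<Sum>k\<in>UNIV. p k))" using c0 ps by simp
  then show ?thesis using split1 split2 a b bb cc dd by (simp add: algebra_simps)
qed




lemma ey_diag:
  fixes s :: "'n::{finite,linorder} \<Rightarrow> real" and C :: "'n rmat"
  assumes s0: "\<And>i. 0 \<le> s i" and sdec: "\<And>i j. i \<le> j \<Longrightarrow> s j \<le> s i"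
    and rk: "rank C \<le> r" and rn: "r \<le> CARD('n)"
  shows "(\<Sum>k\<in>-{k. idx_pos k < r}. (s k)\<^sup>2) \<le> frob (diag_mat s - C)"
proof -
  define T where "T = {k::'n. idx_pos k < r}"
  obtain Q where Qsub: "Q \<subseteq> span (rows C)" and orth: "pairwise orthogonal Q"
    and nrm: "\<And>x. x \<in> Q \<Longrightarrow> norm x = 1" and ind: "independent Q"
    and cardQ: "card Q = dim (span (rows C))" and spanQ: "span Q = span (rows C)"
    using orthonormal_basis_subspace[OF subspace_span[of "rows C"]] by blast
  have fin: "finite Q" using ind by (rule finiteI_independent)
  have cQ: "card Q \<le> r" using cardQ rk by (simp add: row_rank_def)
  define p where "p k = (\<Sum>b\<in>Q. (b$k)\<^sup>2)" for k
  define t where "t k = (s k)\<^sup>2" for k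
  have Crow: "C $ i \<in> span Q" for i
  proof -
    have "C $ i = row i C" by (simp add: row_def vec_eq_iff)
    then have "C $ i \<in> rows C" by (auto simp: rows_def)
    then show ?thesis using spanQ span_base by auto
  qed
  have rowi: "t i - t i * p i \<le> (norm ((diag_mat s - C) $ i))\<^sup>2" for i
  proof -
    have "(norm (axis i (s i)))\<^sup>2 - (\<Sum>b\<in>Q. (axis i (s i) \<bullet> b)\<^sup>2) \<le> (norm (axis i (s i) - C $ i))\<^sup>2"
      by (rule bessel_proj(2)[OF fin orth nrm Crow])
    moreover have "(norm (axis i (s i)))\<^sup>2 = t i"
    proof -
      have "axis i (s i) = s i *\<^sub>R axis i (1::real)" by (simp add: vec_eq_iff axis_def)
      then show ?thesis by (simp add: t_def)
    qed
    moreover have "(\<Sum>b\<in>Q. (axis i (s i) \<bullet> b)\<^sup>2) = t i * p i"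
      by (simp add: t_def p_def inner_axis' sum_distrib_left power_mult_distrib)
    moreover have "(diag_mat s - C) $ i = axis i (s i) - C $ i" by (simp add: diag_mat_row)
    ultimately show ?thesis by simp
  qed
  have frob_ge: "(\<Sum>i\<in>UNIV. t i) - (\<Sum>i\<in>UNIV. p i * t i) \<le> frob (diag_mat s - C)"
  proof -
    have "(\<Sum>i\<in>UNIV. t i) - (\<Sum>i\<in>UNIV. p i * t i) = (\<Sum>i\<in>UNIV. t i - t i * p i)"
      by (simp add: sum_subtractf mult.commute)
    also have "\<dots> \<le> (\<Sum>i\<in>UNIV. (norm ((diag_mat s - C) $ i))\<^sup>2)" by (intro sum_mono rowi)
    finally show ?thesis by (simp add: frob_rows)
  qed
  have p01: "0 \<le> p k \<and> p k \<le> 1" for k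
  proof
    show "0 \<le> p k" by (simp add: p_def sum_nonneg)
    have "(\<Sum>b\<in>Q. (axis k (1::real) \<bullet> b)\<^sup>2) \<le> (norm (axis k (1::real)))\<^sup>2"
      by (rule bessel_proj(1)[OF fin orth nrm])
    then show "p k \<le> 1" by (simp add: p_def inner_axis')
  qed
  have psum: "(\<Sum>k\<in>UNIV. p k) = real (card Q)"
  proof -
    have "(\<Sum>k\<in>UNIV. p k) = (\<Sum>b\<in>Q. \<Sum>k\<in>UNIV. (b$k)\<^sup>2)" unfolding p_def by (rule sum.swap)
    also have "\<dots> = (\<Sum>b\<in>Q. (norm b)\<^sup>2)"
      by (intro sum.cong refl) (simp only: power2_norm_eq_inner, simp add: inner_vec_def power2_eq_square)
    also have "\<dots> = (\<Sum>b\<in>Q. 1)" using nrm by simp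
    finally show ?thesis by simp
  qed
  have cT: "card T = r" unfolding T_def using rn by (rule card_T)
  have tT: "t k' \<le> t k" if "k \<in> T" "k' \<notin> T" for k k'
  proof -
    have "idx_pos k < idx_pos k'" using that by (simp add: T_def)
    then have "k \<le> k'" using idx_pos_le_iff by (metis less_imp_le)
    then have "s k' \<le> s k" by (rule sdec)
    then show ?thesis unfolding t_def using s0 by (intro power_mono) auto
  qed
  have re: "(\<Sum>k\<in>UNIV. p k * t k) \<le> (\<Sum>k\<in>T. t k)"
    by (rule rearr) (use p01 tT psum cQ cT in \<open>auto simp: t_def\<close>)
  have "(\<Sum>k\<in>-T. t k) = (\<Sum>k\<in>UNIV. t k) - (\<Sum>k\<in>T. t k)"
    using sum.Int_Diff[of UNIV t T] by (simp add: Compl_eq_Diff_UNIV)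
  then show ?thesis using re frob_ge by (simp add: T_def t_def)
qed


lemma expand_sq:
  fixes x y :: "real^'n" and A :: "real^'n^'n"
  shows "(x \<bullet> (A *v y))\<^sup>2 =
    (\<Sum>i\<in>UNIV. \<Sum>k\<in>UNIV. \<Sum>j\<in>UNIV. \<Sum>l\<in>UNIV. (A$i$j * A$k$l) * ((x$i * x$k) * (y$j * y$l)))"
proof -
  have e: "x \<bullet> (A *v y) = (\<Sum>i\<in>UNIV. \<Sum>j\<in>UNIV. x$i * A$i$j * y$j)"
    by (simp add: inner_vec_def matrix_vector_mult_def sum_distrib_left mult.assoc)
  show ?thesis unfolding e power2_eq_square sum_product
    by (intro sum.cong refl) (simp add: sum_product mult_ac)
qed

lemma pull3:
  "(\<Sum>a\<in>U. \<Sum>b\<in>V. \<Sum>i\<in>I. g a b i) = (\<Sum>i\<in>I. \<Sum>a\<in>U. \<Sum>b\<in>V. g a b i)"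
proof -
  have "(\<Sum>a\<in>U. \<Sum>b\<in>V. \<Sum>i\<in>I. g a b i) = (\<Sum>a\<in>U. \<Sum>i\<in>I. \<Sum>b\<in>V. g a b i)"
    by (intro sum.cong refl) (rule sum.swap)
  also have "\<dots> = (\<Sum>i\<in>I. \<Sum>a\<in>U. \<Sum>b\<in>V. g a b i)" by (rule sum.swap)
  finally show ?thesis .
qed

lemma frob_quad:
  fixes Sq Skv A :: "real^'n^'n"
  assumes "transpose Sq = Sq" "transpose Skv = Skv"
  shows "(\<Sum>a\<in>UNIV. \<Sum>b\<in>UNIV. ((Sq ** A ** Skv)$a$b)\<^sup>2) =
    (\<Sum>i\<in>UNIV. \<Sum>k\<in>UNIV. \<Sum>j\<in>UNIV. \<Sum>l\<in>UNIV. (A$i$j * A$k$l) * ((Sq ** Sq)$i$k * (Skv ** Skv)$j$l))"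
proof -
  have as: "Sq ** A ** Skv = Sq ** (A ** Skv)" by (rule matrix_mul_assoc[symmetric])
  have G: "(Sq ** A ** Skv)$a$b = Sq$a \<bullet> (A *v column b Skv)" for a b
    unfolding as by (simp add: matrix_matrix_mult_def matrix_vector_mult_def inner_vec_def column_def)
  have sq: "(Sq ** Sq)$i$k = (\<Sum>a\<in>UNIV. Sq$a$i * Sq$a$k)" for i k
  proof -
    have "(Sq ** Sq)$i$k = (transpose Sq ** Sq)$i$k" using assms by simp
    then show ?thesis by (simp add: matrix_matrix_mult_def transpose_def)
  qed
  have kv: "(Skv ** Skv)$j$l = (\<Sum>b\<in>UNIV. column b Skv$j * column b Skv$l)" for j l
  proof -
    have "(Skv ** Skv)$j$l = (Skv ** transpose Skv)$j$l" using assms by simp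
    then show ?thesis by (simp add: matrix_matrix_mult_def transpose_def column_def)
  qed
  have "(\<Sum>a\<in>UNIV. \<Sum>b\<in>UNIV. ((Sq ** A ** Skv)$a$b)\<^sup>2) =
     (\<Sum>a\<in>UNIV. \<Sum>b\<in>UNIV. \<Sum>i\<in>UNIV. \<Sum>k\<in>UNIV. \<Sum>j\<in>UNIV. \<Sum>l\<in>UNIV.
        (A$i$j * A$k$l) * ((Sq$a$i * Sq$a$k) * (column b Skv$j * column b Skv$l)))"
    unfolding G expand_sq by simp
  also have "\<dots> = (\<Sum>i\<in>UNIV. \<Sum>a\<in>UNIV. \<Sum>b\<in>UNIV. \<Sum>k\<in>UNIV. \<Sum>j\<in>UNIV. \<Sum>l\<in>UNIV.
        (A$i$j * A$k$l) * ((Sq$a$i * Sq$a$k) * (column b Skv$j * column b Skv$l)))"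
    by (rule pull3)
  also have "\<dots> = (\<Sum>i\<in>UNIV. \<Sum>k\<in>UNIV. \<Sum>a\<in>UNIV. \<Sum>b\<in>UNIV. \<Sum>j\<in>UNIV. \<Sum>l\<in>UNIV.
        (A$i$j * A$k$l) * ((Sq$a$i * Sq$a$k) * (column b Skv$j * column b Skv$l)))"
    by (intro sum.cong refl pull3)
  also have "\<dots> = (\<Sum>i\<in>UNIV. \<Sum>k\<in>UNIV. \<Sum>j\<in>UNIV. \<Sum>a\<in>UNIV. \<Sum>b\<in>UNIV. \<Sum>l\<in>UNIV.
        (A$i$j * A$k$l) * ((Sq$a$i * Sq$a$k) * (column b Skv$j * column b Skv$l)))"
    by (intro sum.cong refl pull3)
  also have "\<dots> = (\<Sum>i\<in>UNIV. \<Sum>k\<in>UNIV. \<Sum>j\<in>UNIV. \<Sum>l\<in>UNIV. \<Sum>a\<in>UNIV. \<Sum>b\<in>UNIV.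
        (A$i$j * A$k$l) * ((Sq$a$i * Sq$a$k) * (column b Skv$j * column b Skv$l)))"
    by (intro sum.cong refl pull3)
  also have "\<dots> = (\<Sum>i\<in>UNIV. \<Sum>k\<in>UNIV. \<Sum>j\<in>UNIV. \<Sum>l\<in>UNIV. (A$i$j * A$k$l) * ((Sq ** Sq)$i$k * (Skv ** Skv)$j$l))"
    unfolding sq kv
    by (intro sum.cong refl) (simp add: sum_distrib_left sum_distrib_right sum_product mult_ac)
  finally show ?thesis .
qed

lemma qk_err_frob:
  fixes M :: "'a measure" and xq xkv :: "'a \<Rightarrow> real^'n" and Sq Skv A :: "real^'n^'n"
  assumes P: "prob_space M"
    and mq: "xq \<in> borel_measurable M" and mkv: "xkv \<in> borel_measurable M"
    and ind: "prob_space.indep_var M borel xq borel xkv"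
    and iq: "integrable M (\<lambda>\<omega>. (norm (xq \<omega>))\<^sup>2)"
    and ikv: "integrable M (\<lambda>\<omega>. (norm (xkv \<omega>))\<^sup>2)"
    and sym: "transpose Sq = Sq" "transpose Skv = Skv"
    and Rq: "Sq ** Sq = autocorr M xq" and Rkv: "Skv ** Skv = autocorr M xkv"
  shows "integral\<^sup>L M (\<lambda>\<omega>. (xq \<omega> \<bullet> (A *v xkv \<omega>))\<^sup>2) =
         (\<Sum>a\<in>UNIV. \<Sum>b\<in>UNIV. ((Sq ** A ** Skv)$a$b)\<^sup>2)"
proof -
  interpret prob_space M by (rule P)
  have intg: "integrable M (\<lambda>\<omega>. x \<omega> $ i * x \<omega> $ k)"
    if mx: "x \<in> borel_measurable M" and ix: "integrable M (\<lambda>\<omega>. (norm (x \<omega>))\<^sup>2)"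
    for x :: "'a \<Rightarrow> real^'n" and i k
  proof (rule Bochner_Integration.integrable_bound[OF ix])
    have c: "(\<lambda>\<omega>. x \<omega> $ m) \<in> borel_measurable M" for m
      by (rule measurable_compose[OF mx borel_measurable_nth])
    show "(\<lambda>\<omega>. x \<omega> $ i * x \<omega> $ k) \<in> borel_measurable M" by (intro borel_measurable_times c)
    show "AE \<omega> in M. norm (x \<omega> $ i * x \<omega> $ k) \<le> norm ((norm (x \<omega>))\<^sup>2)"
    proof (rule AE_I2)
      fix \<omega>
      have "\<bar>x \<omega> $ i\<bar> * \<bar>x \<omega> $ k\<bar> \<le> norm (x \<omega>) * norm (x \<omega>)"
        by (intro mult_mono component_le_norm_cart) auto
      then show "norm (x \<omega> $ i * x \<omega> $ k) \<le> norm ((norm (x \<omega>))\<^sup>2)"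
        by (simp add: abs_mult power2_eq_square)
    qed
  qed
  have indik: "indep_var borel (\<lambda>\<omega>. xq \<omega> $ i * xq \<omega> $ k) borel (\<lambda>\<omega>. xkv \<omega> $ j * xkv \<omega> $ l)"
    for i k j l
  proof -
    have "indep_var borel ((\<lambda>v::real^'n. v $ i * v $ k) \<circ> xq) borel ((\<lambda>v::real^'n. v $ j * v $ l) \<circ> xkv)"
      by (rule indep_var_compose[OF ind]) measurable
    then show ?thesis by (simp add: comp_def)
  qed
  have E4: "integral\<^sup>L M (\<lambda>\<omega>. (xq \<omega> $ i * xq \<omega> $ k) * (xkv \<omega> $ j * xkv \<omega> $ l)) =
       autocorr M xq $ i $ k * autocorr M xkv $ j $ l" for i k j l
    unfolding autocorr_def
    by (simp add: indep_var_lebesgue_integral[OF indik intg[OF mq iq] intg[OF mkv ikv]])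
  have I4: "integrable M (\<lambda>\<omega>. (xq \<omega> $ i * xq \<omega> $ k) * (xkv \<omega> $ j * xkv \<omega> $ l))" for i k j l
    by (rule indep_var_integrable[OF indik intg[OF mq iq] intg[OF mkv ikv]])
  have "integral\<^sup>L M (\<lambda>\<omega>. (xq \<omega> \<bullet> (A *v xkv \<omega>))\<^sup>2) =
     integral\<^sup>L M (\<lambda>\<omega>. \<Sum>i\<in>UNIV. \<Sum>k\<in>UNIV. \<Sum>j\<in>UNIV. \<Sum>l\<in>UNIV.
        (A$i$j * A$k$l) * ((xq \<omega> $ i * xq \<omega> $ k) * (xkv \<omega> $ j * xkv \<omega> $ l)))"
    by (simp only: expand_sq)
  also have "\<dots> = (\<Sum>i\<in>UNIV. \<Sum>k\<in>UNIV. \<Sum>j\<in>UNIV. \<Sum>l\<in>UNIV.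
        (A$i$j * A$k$l) * (autocorr M xq $ i $ k * autocorr M xkv $ j $ l))"
    by (simp add: integral_sum integrable_sum I4 E4)
  also have "\<dots> = (\<Sum>a\<in>UNIV. \<Sum>b\<in>UNIV. ((Sq ** A ** Skv)$a$b)\<^sup>2)"
    using frob_quad[OF sym, of A] Rq Rkv by simp
  finally show ?thesis .
qed


lemma sqrt_invertible:
  fixes S R :: "real^'n^'n"
  assumes "pos_def_mat R" "S ** S = R"
  shows "invertible S"
proof -
  have "inj ((*v) S)"
  proof (rule linear_injective_0[THEN iffD2])
    show "linear ((*v) S)" by simp
    show "\<forall>v. S *v v = 0 \<longrightarrow> v = 0"
    proof (intro allI impI)
      fix v assume "S *v v = 0"
      then have "R *v v = 0" using assms(2) by (metis matrix_vector_mul_assoc matrix_vector_mult_0_right)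
      then show "v = 0" using assms(1) unfolding pos_def_mat_def by (metis inner_zero_right less_irrefl)
    qed
  qed
  then obtain B where "B ** S = mat 1" using matrix_left_invertible_injective by blast
  then show ?thesis using invertible_left_inverse by blast
qed

lemma matrix_inv_both:
  fixes A :: "real^'n^'n"
  assumes "invertible A"
  shows "A ** matrix_inv A = mat 1" "matrix_inv A ** A = mat 1"
proof -
  have "A ** matrix_inv A = mat 1 \<and> matrix_inv A ** A = mat 1"
    unfolding matrix_inv_def by (rule someI_ex) (use assms in \<open>simp add: invertible_def\<close>)
  then show "A ** matrix_inv A = mat 1" "matrix_inv A ** A = mat 1" by auto
qed

lemma matrix_inv_invertible:
  fixes A :: "real^'n^'n"
  assumes "invertible A" shows "invertible (matrix_inv A)"
  using matrix_inv_both[OF assms] unfolding invertible_def by blast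

lemma mat_diff_ldistrib: "(A::real^'n^'m) ** (B - C) = A ** B - A ** C"
  by (simp add: matrix_matrix_mult_def vec_eq_iff sum_subtractf algebra_simps)

lemma mat_diff_rdistrib: "((B::real^'n^'m) - C) ** A = B ** A - C ** A"
  by (simp add: matrix_matrix_mult_def vec_eq_iff sum_subtractf algebra_simps)

lemma frob_diag: "frob (diag_mat f) = (\<Sum>i\<in>UNIV. (f i)\<^sup>2)"
proof -
  have "frob (diag_mat f) = (\<Sum>i\<in>UNIV. \<Sum>j\<in>UNIV. if i = j then (f i)\<^sup>2 else 0)"
    unfolding frob_def diag_mat_def by (intro sum.cong refl) simp
  then show ?thesis by simp
qed

lemma frob_orth2:
  fixes U V X :: "real^'n^'n"
  assumes "orthogonal_matrix U" "orthogonal_matrix V"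
  shows "frob (U ** X ** transpose V) = frob X"
  using assms by (simp add: frob_orth_left frob_orth_right)

theorem theorem2:
  fixes M :: "'a measure"
    and xq xkv :: "'a \<Rightarrow> (real, 'n::{finite,linorder}) vec"
    and W Sq Skv U V :: "'n rmat"
    and s :: "'n \<Rightarrow> real"
    and r :: nat
  assumes "prob_space M"
    and "xq \<in> borel_measurable M" and "xkv \<in> borel_measurable M"
    and "prob_space.indep_var M borel xq borel xkv"
    and "integrable M (\<lambda>\<omega>. (norm (xq \<omega>))\<^sup>2)"
    and "integrable M (\<lambda>\<omega>. (norm (xkv \<omega>))\<^sup>2)"
    and "pos_def_mat (autocorr M xq)" and "pos_def_mat (autocorr M xkv)"
    and "is_sqrt_mat Sq (autocorr M xq)" and "is_sqrt_mat Skv (autocorr M xkv)"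
    and "1 \<le> r" and "r \<le> card (UNIV :: 'n set)"
    and "is_svd (Sq ** W ** Skv) U s V"
  shows "let Wopt = matrix_inv Sq ** svd_trunc r U s V ** matrix_inv Skv in
           rank Wopt \<le> r \<and> (r \<le> rank W \<longrightarrow> rank Wopt = r) \<and>
           (\<forall>Wt. rank Wt \<le> r \<longrightarrow> qk_err M xq xkv W Wopt \<le> qk_err M xq xkv W Wt)"
proof -
  note P = assms(1) and mq = assms(2) and mkv = assms(3) and ind = assms(4)
    and iq = assms(5) and ikv = assms(6)
  define T where "T = {k::'n. idx_pos k < r}"
  define sr where "sr i = (if idx_pos i < r then s i else 0)" for i
  define D where "D = diag_mat s"
  define Dr where "Dr = diag_mat sr"
  define E where "E = svd_trunc r U s V"
  define Sqi where "Sqi = matrix_inv Sq"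
  define Skvi where "Skvi = matrix_inv Skv"
  define Wopt where "Wopt = Sqi ** E ** Skvi"
  have symq: "transpose Sq = Sq" and Rq: "Sq ** Sq = autocorr M xq"
    using assms(9) by (auto simp: is_sqrt_mat_def pos_semidef_mat_def)
  have symkv: "transpose Skv = Skv" and Rkv: "Skv ** Skv = autocorr M xkv"
    using assms(10) by (auto simp: is_sqrt_mat_def pos_semidef_mat_def)
  have invq: "invertible Sq" by (rule sqrt_invertible[OF assms(7) Rq])
  have invkv: "invertible Skv" by (rule sqrt_invertible[OF assms(8) Rkv])
  have oU: "orthogonal_matrix U" and oV: "orthogonal_matrix V"
    and s0: "\<And>i. 0 \<le> s i" and sdec: "\<And>i j. i \<le> j \<Longrightarrow> s j \<le> s i"
    and Bdec: "Sq ** W ** Skv = U ** D ** transpose V"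
    using assms(13) by (auto simp: is_svd_def D_def)
  have iU: "invertible U" and iVt: "invertible (transpose V)"
    using oU oV by (auto intro: orth_invertible)
  have Edef: "E = U ** Dr ** transpose V" by (simp add: E_def svd_trunc_def Dr_def sr_def[abs_def])
  have rankE: "rank E = rank Dr"
    unfolding Edef by (simp add: rank_inv_right[OF iVt] rank_inv_left[OF iU])
  have rankWopt: "rank Wopt = rank Dr"
  proof -
    have "rank Wopt = rank (Sqi ** E)" unfolding Wopt_def Skvi_def
      by (rule rank_inv_right[OF matrix_inv_invertible[OF invkv]])
    also have "\<dots> = rank E" unfolding Sqi_def by (rule rank_inv_left[OF matrix_inv_invertible[OF invq]])
    finally show ?thesis using rankE by simp
  qed
  have rDr: "rank Dr = card {i. sr i \<noteq> 0}" unfolding Dr_def by (rule rank_diag)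
  have part1: "rank Wopt \<le> r"
  proof -
    have "card {i. sr i \<noteq> 0} \<le> card T"
      by (intro card_mono) (auto simp: sr_def T_def)
    moreover have "card T \<le> r" unfolding T_def by (rule card_T_le)
    ultimately show ?thesis using rankWopt rDr by linarith
  qed
  have part2: "rank Wopt = r" if rW: "r \<le> rank W"
  proof -
    have "rank W = rank (Sq ** W ** Skv)"
      by (simp add: rank_inv_right[OF invkv] rank_inv_left[OF invq] matrix_mul_assoc[symmetric])
    also have "\<dots> = rank D" unfolding Bdec
      by (simp add: rank_inv_right[OF iVt] rank_inv_left[OF iU])
    also have "\<dots> = card {i. s i \<noteq> 0}" unfolding D_def by (rule rank_diag)
    finally have rW': "r \<le> card {i. s i \<noteq> 0}" using rW by simp
    have nz: "s k \<noteq> 0" if "k \<in> T" for k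
    proof
      assume sk: "s k = 0"
      have "{i. s i \<noteq> 0} \<subseteq> {i. i < k}"
      proof
        fix i assume "i \<in> {i. s i \<noteq> 0}"
        then have "s i \<noteq> 0" by simp
        show "i \<in> {i. i < k}"
        proof (rule ccontr)
          assume "i \<notin> {i. i < k}"
          then have "k \<le> i" by simp
          then have "s i \<le> 0" using sdec sk by metis
          then show False using s0[of i] \<open>s i \<noteq> 0\<close> by simp
        qed
      qed
      then have "card {i. s i \<noteq> 0} \<le> idx_pos k" unfolding idx_pos_def by (intro card_mono) auto
      then show False using rW' that by (simp add: T_def)
    qed
    have "{i. sr i \<noteq> 0} = T" using nz by (auto simp: sr_def T_def)
    then show ?thesis using rankWopt rDr card_T[OF assms(12)] by (simp add: T_def)
  qed
  have err: "qk_err M xq xkv W X = frob (Sq ** W ** Skv - Sq ** X ** Skv)" for X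
  proof -
    have "qk_err M xq xkv W X = frob (Sq ** (W - X) ** Skv)"
      unfolding qk_err_def frob_def
      by (rule qk_err_frob[OF P mq mkv ind iq ikv symq symkv Rq Rkv])
    then show ?thesis by (simp add: mat_diff_ldistrib mat_diff_rdistrib)
  qed
  have SWS: "Sq ** Wopt ** Skv = E"
  proof -
    have "Sq ** Wopt ** Skv = (Sq ** Sqi) ** E ** (Skvi ** Skv)"
      unfolding Wopt_def by (simp add: matrix_mul_assoc)
    also have "\<dots> = E" using matrix_inv_both[OF invq] matrix_inv_both[OF invkv]
      by (simp add: Sqi_def Skvi_def)
    finally show ?thesis .
  qed
  have errOpt: "qk_err M xq xkv W Wopt = (\<Sum>k\<in>-T. (s k)\<^sup>2)"
  proof -
    have "qk_err M xq xkv W Wopt = frob (U ** D ** transpose V - U ** Dr ** transpose V)"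
      unfolding err SWS Bdec Edef ..
    also have "\<dots> = frob (U ** (D - Dr) ** transpose V)"
      by (simp add: mat_diff_ldistrib mat_diff_rdistrib)
    also have "\<dots> = frob (D - Dr)" by (rule frob_orth2[OF oU oV])
    also have "\<dots> = (\<Sum>k\<in>UNIV. (if k \<in> T then 0 else (s k)\<^sup>2))"
      unfolding D_def Dr_def diag_mat_diff frob_diag by (intro sum.cong refl) (simp add: sr_def T_def)
    also have "\<dots> = (\<Sum>k\<in>-T. (s k)\<^sup>2)" by (simp add: sum.If_cases Compl_eq_Diff_UNIV)
    finally show ?thesis .
  qed
  have part3: "qk_err M xq xkv W Wopt \<le> qk_err M xq xkv W Wt" if rWt: "rank Wt \<le> r" for Wt
  proof -
    define C where "C = Sq ** Wt ** Skv"
    define C' where "C' = transpose U ** C ** V"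
    have rC': "rank C' \<le> r"
    proof -
      have "rank C' \<le> rank (transpose U ** C)" unfolding C'_def by (rule rank_mul_le_left)
      also have "\<dots> \<le> rank C" by (rule rank_mul_le_right)
      also have "\<dots> \<le> rank (Sq ** Wt)" unfolding C_def by (rule rank_mul_le_left)
      also have "\<dots> \<le> rank Wt" by (rule rank_mul_le_right)
      finally show ?thesis using rWt by simp
    qed
    have CC: "U ** C' ** transpose V = C"
    proof -
      have "U ** C' ** transpose V = (U ** transpose U) ** C ** (V ** transpose V)"
        unfolding C'_def by (simp add: matrix_mul_assoc)
      also have "\<dots> = C" using oU oV by (simp add: orthogonal_matrix_def)
      finally show ?thesis .
    qed
    have "qk_err M xq xkv W Wt = frob (U ** D ** transpose V - U ** C' ** transpose V)"
      unfolding err Bdec CC C_def ..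
    also have "\<dots> = frob (U ** (D - C') ** transpose V)"
      by (simp add: mat_diff_ldistrib mat_diff_rdistrib)
    also have "\<dots> = frob (D - C')" by (rule frob_orth2[OF oU oV])
    finally have "qk_err M xq xkv W Wt = frob (diag_mat s - C')" by (simp add: D_def)
    moreover have "(\<Sum>k\<in>-T. (s k)\<^sup>2) \<le> frob (diag_mat s - C')"
      unfolding T_def by (rule ey_diag[OF s0 sdec rC' assms(12)])
    ultimately show ?thesis using errOpt by simp
  qed
  show ?thesis unfolding Let_def
    using part1 part2 part3 by (simp add: Wopt_def Sqi_def Skvi_def E_def)
qed

end
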